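(* Let $E$ be a Banach space, $\mathcal{E}$ the $\sigma$-algebra on $E$ generated by the (open) balls, and $F$ a linear subspace of $E^*$ such that $x\mapsto\langle x,\xi\rangle$ is $\mathcal{E}$-measurable for every $\xi\in F$. Let $\{a_n\}_{n\in\mathbf{N}}$ be a positive sequence with $a_n\to\infty$. Let $\Phi_n,\Phi:E\times F\to\mathbf{R}$ ($n\in\mathbf{N}$) be such that: 1. For all $\xi\in F$, $\Phi_n(\cdot,\xi)$ is $\mathcal{E}$-measurable. 2. For all $\xi\in F$, $\Phi(\cdot,\xi)$ is $\mathcal{E}$-measurable and continuous, and $\Phi(x,0)=0$ for all $x\in E$. 3. For all $\xi\in F$ and all compact $K\subset E$, $b_n(K,\xi):=\sup_{x\in K}|a_n^{-1}\Phi_n(x,a_n\xi)-\Phi(x,\xi)|\to0$ as $n\to\infty$. For each $n$, let $Y_n$ be an $E$-valued $\mathcal{E}$-measurable random vector defined on a probability space $(\Omega_n,\mathcal{A}_n,\mathbf{P}_n)$ (with expectation $\mathbf{E}_n$), and consider: 4. For all $n\in\mathbf{N}$ and $\xi\in F$, $\mathbf{E}_n\exp[\langle Y_n,\xi\rangle-\Phi_n(Y_n,\xi)]=1$. 5. $\{\mathcal{L}_{\mathbf{P}_n}(Y_n)\}_{n\in\mathbf{N}}$ is exponentially tight. Then if 1–4 hold, for every compact $K\subset E$, $$\limsup_n a_n^{-1}\log\mathbf{P}_n\{Y_n\in K\}\le-\inf_{x\in K}\Phi^*(x,x),$$ and if 1–5 hold, for every $A\in\mathcal{E}$, $$\limsup_n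 a_n^{-1}\log\mathbf{P}_n\{Y_n\in A\}\le-\inf_{x\in \bar A}\Phi^*(x,x).$$
   Context: For $x,y\in E$, $\Phi^*(x,y)=\sup_{\xi\in F}[\langle y,\xi\rangle-\Phi(x,\xi)]$. Exponential tightness of $\{\mathcal{L}_{\mathbf{P}_n}(Y_n)\}$ means: for every $b>0$ there is a compact $K\subset E$ with $\limsup_n a_n^{-1}\log\mathbf{P}_n\{Y_n\notin K\}\le -b$. $\bar A$ denotes the closure of $A$. *)

theory Defs
  imports "HOL-Probability.Probability"
begin

definition ball_sigma :: "'a::metric_space measure" where
  "ball_sigma = sigma UNIV {ball x r | x r. True}"

definition scaled_log :: "real \<Rightarrow> real \<Rightarrow> ereal" where
  "scaled_log a p = (if p = 0 then -\<infinity> else ereal (ln p / a))"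

definition Phi_star ::
  "('a::real_normed_vector \<Rightarrow>\<^sub>L real) set \<Rightarrow> ('a \<Rightarrow> ('a \<Rightarrow>\<^sub>L real) \<Rightarrow> real)
     \<Rightarrow> 'a \<Rightarrow> 'a \<Rightarrow> ereal" where
  "Phi_star F Phi x y = (SUP \<xi>\<in>F. ereal (blinfun_apply \<xi> y - Phi x \<xi>))"

definition exp_tight ::
  "(nat \<Rightarrow> real) \<Rightarrow> (nat \<Rightarrow> 'b measure) \<Rightarrow> (nat \<Rightarrow> 'b \<Rightarrow> 'a::topological_space) \<Rightarrow> bool" where
  "exp_tight a M Y = (\<forall>b>0. \<exists>K. compact K \<and>
     limsup (\<lambda>n. scaled_log (a n) (measure (M n) {\<omega>\<in>space (M n). Y n \<omega> \<notin> K}))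
       \<le> - ereal b)"

end

theory Submission imports Defs begin

lemma compact_in_ball_sigma:
  fixes K :: "'a::metric_space set"
  assumes K: "compact K"
  shows "K \<in> sets ball_sigma"
proof -
  have ball_in: "ball x r \<in> sets ball_sigma" for x :: 'a and r
    unfolding ball_sigma_def by (subst sets_measure_of) (auto intro: sigma_sets.Basic)
  have "\<exists>T. finite T \<and> T \<subseteq> K \<and> K \<subseteq> (\<Union>x\<in>T. ball x (1 / Suc m))" for m :: nat
  proof -
    have "K \<subseteq> (\<Union>x\<in>K. ball x (1 / Suc m))" by auto
    from compactE_image[OF K _ this] show ?thesis by (metis open_ball)
  qed
  then obtain T where T: "\<And>m. finite (T m) \<and> T m \<subseteq> K \<and> K \<subseteq> (\<Union>x\<in>T m. ball x (1 / Suc m))"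
    by metis
  have eq: "K = (\<Inter>m. \<Union>x\<in>T m. ball x (1 / Suc m))"
  proof
    show "K \<subseteq> (\<Inter>m. \<Union>x\<in>T m. ball x (1 / Suc m))" using T by blast
  next
    show "(\<Inter>m. \<Union>x\<in>T m. ball x (1 / Suc m)) \<subseteq> K"
    proof
      fix y assume y: "y \<in> (\<Inter>m. \<Union>x\<in>T m. ball x (1 / Suc m))"
      have "y \<in> closure K"
        unfolding closure_approachable
      proof (intro allI impI)
        fix e :: real assume "e > 0"
        then obtain m :: nat where m: "1 / Suc m < e"
          by (metis nat_approx_posE)
        from y obtain x where "x \<in> T m" "y \<in> ball x (1 / Suc m)" by blast
        then show "\<exists>x\<in>K. dist x y < e" using T m
          by (metis dist_commute mem_ball order.strict_trans subsetD)
      qed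
      then show "y \<in> K" using K by (simp add: compact_imp_closed closure_closed)
    qed
  qed
  show ?thesis
    apply (subst eq)
    apply (rule sets.countable_INT)
    using T ball_in by (auto intro!: sets.finite_UN)
qed

lemma scaled_log_le:
  assumes "a > 0" "0 \<le> p" "p \<le> exp (- (a * d))"
  shows "scaled_log a p \<le> ereal (- d)"
proof (cases "p = 0")
  case True then show ?thesis by (simp add: scaled_log_def)
next
  case False
  then have "ln p \<le> - (a * d)" using assms
    by (metis exp_le_cancel_iff exp_ln order_le_less)
  then have "ln p / a \<le> - d" using assms(1) by (simp add: divide_simps mult.commute)
  then show ?thesis using False by (simp add: scaled_log_def)
qed

lemma scaled_log_lt:
  assumes "a > 0" "0 \<le> p" "scaled_log a p < ereal (- d)"
  shows "p \<le> exp (- (a * d))"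
proof (cases "p = 0")
  case True then show ?thesis by simp
next
  case False
  then have "ln p / a < - d" using assms by (simp add: scaled_log_def)
  then have "ln p < - (a * d)" using assms(1) by (simp add: divide_simps mult.commute)
  then show ?thesis using False assms(2)
    by (metis exp_le_cancel_iff exp_ln order_le_less)
qed

lemma absorb:
  fixes a :: "nat \<Rightarrow> real"
  assumes "filterlim a at_top sequentially" "d' < d" "m \<ge> 0"
  shows "eventually (\<lambda>n. m * exp (- (a n * d)) \<le> exp (- (a n * d'))) sequentially"
proof -
  have "eventually (\<lambda>n. ln (m + 1) / (d - d') \<le> a n) sequentially"
    using assms(1) by (simp add: filterlim_at_top)
  then show ?thesis
  proof eventually_elim
    case (elim n)
    then have "ln (m + 1) \<le> a n * (d - d')" using assms(2) by (simp add: divide_simps)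
    then have "m + 1 \<le> exp (a n * (d - d'))" using assms(3)
      by (metis add_nonneg_pos exp_le_cancel_iff exp_ln zero_less_one)
    then have "m \<le> exp (a n * (d - d'))" by simp
    then have "m * exp (- (a n * d)) \<le> exp (a n * (d - d')) * exp (- (a n * d))"
      by (simp add: mult_right_mono)
    also have "\<dots> = exp (- (a n * d'))" by (simp add: exp_add[symmetric] algebra_simps)
    finally show ?case .
  qed
qed

lemma final_bound:
  fixes a p :: "nat \<Rightarrow> real" and I :: ereal
  assumes "\<And>n. a n > 0" "\<And>n. p n \<ge> 0"
    and ev: "\<And>d. ereal d < I \<Longrightarrow> eventually (\<lambda>n. p n \<le> exp (- (a n * d))) sequentially"
  shows "limsup (\<lambda>n. scaled_log (a n) (p n)) \<le> - I"
proof (rule ccontr)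
  let ?L = "limsup (\<lambda>n. scaled_log (a n) (p n))"
  assume "\<not> ?L \<le> - I"
  then have "- ?L < I" by (metis ereal_uminus_less_reorder not_le)
  then obtain d where d: "- ?L < ereal d" "ereal d < I" using ereal_dense2 by blast
  have "?L \<le> ereal (- d)"
    by (rule Limsup_bounded) (use ev[OF d(2)] in \<open>eventually_elim, auto intro: scaled_log_le assms\<close>)
  then show False using d(1)
    by (metis ereal_uminus_less_reorder not_le uminus_ereal.simps(1))
qed


theorem theorem2p1:
  fixes F :: "('a::banach \<Rightarrow>\<^sub>L real) set"
    and a :: "nat \<Rightarrow> real"
    and Phin :: "nat \<Rightarrow> 'a \<Rightarrow> ('a \<Rightarrow>\<^sub>L real) \<Rightarrow> real"
    and Phi :: "'a \<Rightarrow> ('a \<Rightarrow>\<^sub>L real) \<Rightarrow> real"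
    and M :: "nat \<Rightarrow> 'b measure"
    and Y :: "nat \<Rightarrow> 'b \<Rightarrow> 'a"
  assumes F_subspace: "subspace F"
    and F_meas: "\<And>\<xi>. \<xi> \<in> F \<Longrightarrow> (\<lambda>x. blinfun_apply \<xi> x) \<in> borel_measurable ball_sigma"
    and a_pos: "\<And>n. a n > 0"
    and a_lim: "filterlim a at_top sequentially"
    and H1: "\<And>n \<xi>. \<xi> \<in> F \<Longrightarrow> (\<lambda>x. Phin n x \<xi>) \<in> borel_measurable ball_sigma"
    and H2_meas: "\<And>\<xi>. \<xi> \<in> F \<Longrightarrow> (\<lambda>x. Phi x \<xi>) \<in> borel_measurable ball_sigma"
    and H2_cont: "\<And>\<xi>. \<xi> \<in> F \<Longrightarrow> continuous_on UNIV (\<lambda>x. Phi x \<xi>)"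
    and H2_zero: "\<And>x. Phi x 0 = 0"
    and H3: "\<And>\<xi> K. \<xi> \<in> F \<Longrightarrow> compact K \<Longrightarrow>
       (\<lambda>n. SUP x\<in>K. ennreal \<bar>Phin n x (a n *\<^sub>R \<xi>) / a n - Phi x \<xi>\<bar>) \<longlonglongrightarrow> 0"
    and P: "\<And>n. prob_space (M n)"
    and Y_meas: "\<And>n. Y n \<in> measurable (M n) ball_sigma"
    and H4: "\<And>n \<xi>. \<xi> \<in> F \<Longrightarrow>
       (\<integral>\<^sup>+ \<omega>. ennreal (exp (blinfun_apply \<xi> (Y n \<omega>) - Phin n (Y n \<omega>) \<xi>)) \<partial>M n) = 1"
  shows "(\<forall>K. compact K \<longrightarrow>
            limsup (\<lambda>n. scaled_log (a n) (measure (M n) {\<omega>\<in>space (M n). Y n \<omega> \<in> K}))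
              \<le> - (INF x\<in>K. Phi_star F Phi x x))
       \<and> (exp_tight a M Y \<longrightarrow>
           (\<forall>A\<in>sets ball_sigma.
            limsup (\<lambda>n. scaled_log (a n) (measure (M n) {\<omega>\<in>space (M n). Y n \<omega> \<in> A}))
              \<le> - (INF x\<in>closure A. Phi_star F Phi x x)))"
proof -
  define Pn where "Pn n C = measure (M n) {\<omega> \<in> space (M n). Y n \<omega> \<in> C}" for n C
  have Pn_nn: "Pn n C \<ge> 0" for n C unfolding Pn_def by simp
  have Sset: "{\<omega> \<in> space (M n). Y n \<omega> \<in> C} \<in> sets (M n)" if "C \<in> sets ball_sigma" for n C
  proof -
    have "Y n -` C \<inter> space (M n) \<in> sets (M n)" using measurable_sets[OF Y_meas that] .
    then show ?thesis by (simp add: Int_def conj_commute)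
  qed
  have fin: "emeasure (M n) S \<noteq> \<infinity>" for n S
    using finite_measure.emeasure_finite[OF prob_space.axioms(1)[OF P]] by simp
  have mono: "Pn n C \<le> Pn n D" if "C \<subseteq> D" "D \<in> sets ball_sigma" for n C D
    unfolding Pn_def
    by (rule finite_measure.finite_measure_mono[OF prob_space.axioms(1)[OF P]]) (use that Sset in auto)
  have A: "eventually (\<lambda>n. Pn n C \<le> exp (- (a n * d))) sequentially"
    if xi: "\<xi> \<in> F" and C: "compact C" and c: "\<forall>y\<in>C. c \<le> \<xi> y - Phi y \<xi>" and dc: "d < c"
    for \<xi> C c d
  proof -
    have "0 < ennreal (c - d)" using dc by simp
    from order_tendstoD(2)[OF H3[OF xi C] this]
    show ?thesis
    proof eventually_elim
      case (elim n)
      let ?S = "{\<omega> \<in> space (M n). Y n \<omega> \<in> C}"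
      have Smeas: "?S \<in> sets (M n)" using Sset compact_in_ball_sigma C by blast
      have unif: "\<bar>Phin n y (a n *\<^sub>R \<xi>) / a n - Phi y \<xi>\<bar> < c - d" if "y \<in> C" for y
      proof -
        have "ennreal \<bar>Phin n y (a n *\<^sub>R \<xi>) / a n - Phi y \<xi>\<bar> < ennreal (c - d)"
          using elim that by (meson SUP_upper order.strict_trans1)
        then show ?thesis using dc by (simp add: ennreal_less_iff)
      qed
      have pt: "a n * d \<le> blinfun_apply (a n *\<^sub>R \<xi>) y - Phin n y (a n *\<^sub>R \<xi>)" if "y \<in> C" for y
      proof -
        have an: "a n > 0" by (rule a_pos)
        have "Phin n y (a n *\<^sub>R \<xi>) / a n < Phi y \<xi> + (c - d)" using unif[OF that] by linarith
        then have "Phin n y (a n *\<^sub>R \<xi>) < a n * (Phi y \<xi> + (c - d))"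
          using an by (simp add: divide_simps mult.commute)
        moreover have "c \<le> \<xi> y - Phi y \<xi>" using c that by blast
        ultimately have "a n * d \<le> a n * (\<xi> y) - Phin n y (a n *\<^sub>R \<xi>)"
          using an by (smt (verit, ccfv_SIG) distrib_left mult_left_mono right_diff_distrib)
        then show ?thesis by (simp add: scaleR_blinfun.rep_eq)
      qed
      have xin: "a n *\<^sub>R \<xi> \<in> F" using F_subspace xi by (simp add: subspace_scale)
      have "ennreal (exp (a n * d)) * emeasure (M n) ?S
          = (\<integral>\<^sup>+ \<omega>. ennreal (exp (a n * d)) * indicator ?S \<omega> \<partial>M n)"
        by (rule nn_integral_cmult_indicator[symmetric, OF Smeas])
      also have "\<dots> \<le> (\<integral>\<^sup>+ \<omega>. ennreal (exp (blinfun_apply (a n *\<^sub>R \<xi>) (Y n \<omega>) - Phin n (Y n \<omega>) (a n *\<^sub>R \<xi>))) \<partial>M n)"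
      proof (rule nn_integral_mono)
        fix \<omega> assume "\<omega> \<in> space (M n)"
        show "ennreal (exp (a n * d)) * indicator ?S \<omega>
          \<le> ennreal (exp (blinfun_apply (a n *\<^sub>R \<xi>) (Y n \<omega>) - Phin n (Y n \<omega>) (a n *\<^sub>R \<xi>)))"
        proof (cases "\<omega> \<in> ?S")
          case True
          then show ?thesis using pt[of "Y n \<omega>"] by (simp add: ennreal_leI)
        next
          case False then show ?thesis by simp
        qed
      qed
      also have "\<dots> = 1" by (rule H4[OF xin])
      finally have "ennreal (exp (a n * d)) * ennreal (Pn n C) \<le> 1"
        unfolding Pn_def using finite_measure.emeasure_eq_measure[OF prob_space.axioms(1)[OF P]] by simp
      then have "exp (a n * d) * Pn n C \<le> 1"
        by (simp add: ennreal_mult''[symmetric] Pn_nn ennreal_le_1)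
      then show "Pn n C \<le> exp (- (a n * d))"
        by (simp add: exp_minus divide_simps mult.commute)
    qed
  qed
  have B: "eventually (\<lambda>n. Pn n K \<le> exp (- (a n * d))) sequentially"
    if K: "compact K" and dI: "ereal d < (INF x\<in>K. Phi_star F Phi x x)" for K d
  proof -
    obtain d1 where d1: "ereal d < ereal d1" "ereal d1 < (INF x\<in>K. Phi_star F Phi x x)"
      using ereal_dense2[OF dI] by blast
    obtain d' where d': "d < d'" "d' < d1" using d1(1) dense by auto
    define U where "U (\<xi>::'a \<Rightarrow>\<^sub>L real) = {y. d1 < \<xi> y - Phi y \<xi>}" for \<xi>
    have Uopen: "open (U \<xi>)" if "\<xi> \<in> F" for \<xi>
      unfolding U_def
      by (rule open_Collect_less) (auto intro!: continuous_intros H2_cont that)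
    have cov: "K \<subseteq> (\<Union>\<xi>\<in>F. U \<xi>)"
    proof
      fix x assume x: "x \<in> K"
      then have "ereal d1 < Phi_star F Phi x x" using d1(2) by (meson INF_lower order.strict_trans2)
      then obtain \<xi> where "\<xi> \<in> F" "ereal d1 < ereal (\<xi> x - Phi x \<xi>)"
        unfolding Phi_star_def by (auto simp: less_SUP_iff)
      then show "x \<in> (\<Union>\<xi>\<in>F. U \<xi>)" unfolding U_def by auto
    qed
    obtain D where D: "D \<subseteq> F" "finite D" "K \<subseteq> (\<Union>\<xi>\<in>D. U \<xi>)"
      using compactE_image[OF K Uopen cov] by blast
    define C where "C (\<xi>::'a \<Rightarrow>\<^sub>L real) = K \<inter> {y. d1 \<le> \<xi> y - Phi y \<xi>}" for \<xi>
    have Ccomp: "compact (C \<xi>)" if "\<xi> \<in> F" for \<xi>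
      unfolding C_def
      by (rule compact_Int_closed[OF K], rule closed_Collect_le) (auto intro!: continuous_intros H2_cont that)
    have ev: "eventually (\<lambda>n. \<forall>\<xi>\<in>D. Pn n (C \<xi>) \<le> exp (- (a n * d'))) sequentially"
    proof (rule eventually_ball_finite[OF D(2)], rule ballI)
      fix \<xi> assume "\<xi> \<in> D"
      then have xi: "\<xi> \<in> F" using D by auto
      show "eventually (\<lambda>n. Pn n (C \<xi>) \<le> exp (- (a n * d'))) sequentially"
        by (rule A[OF xi Ccomp[OF xi] _ d'(2)]) (auto simp: C_def)
    qed
    have KC: "K \<subseteq> (\<Union>\<xi>\<in>D. C \<xi>)" using D(3) unfolding U_def C_def by (force intro: less_imp_le)
    have Cmeas: "(\<Union>\<xi>\<in>D. C \<xi>) \<in> sets ball_sigma"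
      using D Ccomp compact_in_ball_sigma by (auto intro!: sets.finite_UN)
    from ev absorb[OF a_lim d'(1) of_nat_0_le_iff[of "card D"]]
    show ?thesis
    proof eventually_elim
      case (elim n)
      have "Pn n K \<le> Pn n (\<Union>\<xi>\<in>D. C \<xi>)" by (rule mono[OF KC Cmeas])
      also have "\<dots> = measure (M n) (\<Union>\<xi>\<in>D. {\<omega> \<in> space (M n). Y n \<omega> \<in> C \<xi>})"
        unfolding Pn_def by (rule arg_cong[where f="measure (M n)"]) auto
      also have "\<dots> \<le> (\<Sum>\<xi>\<in>D. measure (M n) {\<omega> \<in> space (M n). Y n \<omega> \<in> C \<xi>})"
        by (rule measure_subadditive_finite[OF D(2)])
           (use D Ccomp compact_in_ball_sigma Sset fin in \<open>auto, blast\<close>)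
      also have "\<dots> \<le> (\<Sum>\<xi>\<in>D. exp (- (a n * d')))"
        by (rule sum_mono) (use elim in \<open>auto simp: Pn_def\<close>)
      also have "\<dots> = real (card D) * exp (- (a n * d'))" by simp
      also have "\<dots> \<le> exp (- (a n * d))" using elim by simp
      finally show ?case .
    qed
  qed
  have part1: "limsup (\<lambda>n. scaled_log (a n) (Pn n K)) \<le> - (INF x\<in>K. Phi_star F Phi x x)"
    if "compact K" for K
    by (rule final_bound[OF a_pos Pn_nn B[OF that]])
  have part2: "limsup (\<lambda>n. scaled_log (a n) (Pn n A)) \<le> - (INF x\<in>closure A. Phi_star F Phi x x)"
    if et: "exp_tight a M Y" and Am: "A \<in> sets ball_sigma" for A
  proof (rule final_bound[OF a_pos Pn_nn])
    fix d assume dI: "ereal d < (INF x\<in>closure A. Phi_star F Phi x x)"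
    obtain d' where d': "ereal d < ereal d'" "ereal d' < (INF x\<in>closure A. Phi_star F Phi x x)"
      using ereal_dense2[OF dI] by blast
    have "\<bar>d'\<bar> + 1 > 0" by simp
    then obtain K where K: "compact K"
      and lK: "limsup (\<lambda>n. scaled_log (a n) (measure (M n) {\<omega>\<in>space (M n). Y n \<omega> \<notin> K})) \<le> - ereal (\<bar>d'\<bar> + 1)"
      using et unfolding exp_tight_def by blast
    have "limsup (\<lambda>n. scaled_log (a n) (measure (M n) {\<omega>\<in>space (M n). Y n \<omega> \<notin> K})) < ereal (- d')"
      using lK by (rule order.strict_trans1) simp
    then have ev1: "eventually (\<lambda>n. scaled_log (a n) (measure (M n) {\<omega>\<in>space (M n). Y n \<omega> \<notin> K}) < ereal (- d')) sequentially"
      by (rule Limsup_lessD)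
    have CK: "compact (closure A \<inter> K)" using K by (simp add: compact_Int_closed closed_closure Int_commute)
    have "(INF x\<in>closure A. Phi_star F Phi x x) \<le> (INF x\<in>closure A \<inter> K. Phi_star F Phi x x)"
      by (rule INF_superset_mono) auto
    then have ev2: "eventually (\<lambda>n. Pn n (closure A \<inter> K) \<le> exp (- (a n * d'))) sequentially"
      using B[OF CK] d'(2) by (meson order.strict_trans2)
    have dd: "d < d'" using d'(1) by simp
    from ev1 ev2 absorb[OF a_lim dd zero_le_numeral[where ?'a=real and n="num.Bit0 num.One"]]
    show "eventually (\<lambda>n. Pn n A \<le> exp (- (a n * d))) sequentially"
    proof eventually_elim
      case (elim n)
      have q: "measure (M n) {\<omega>\<in>space (M n). Y n \<omega> \<notin> K} \<le> exp (- (a n * d'))"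
        using scaled_log_lt[OF a_pos _ elim(1)] by simp
      have Km: "K \<in> sets ball_sigma" using K compact_in_ball_sigma by blast
      have CKm: "closure A \<inter> K \<in> sets ball_sigma" using CK compact_in_ball_sigma by blast
      have m1: "{\<omega>\<in>space (M n). Y n \<omega> \<notin> K} \<in> sets (M n)"
      proof -
        have "{\<omega>\<in>space (M n). Y n \<omega> \<notin> K} = space (M n) - {\<omega>\<in>space (M n). Y n \<omega> \<in> K}" by auto
        then show ?thesis using Sset[OF Km] by auto
      qed
      have "Pn n A \<le> measure (M n) ({\<omega>\<in>space (M n). Y n \<omega> \<in> closure A \<inter> K} \<union> {\<omega>\<in>space (M n). Y n \<omega> \<notin> K})"
        unfolding Pn_def
        by (rule finite_measure.finite_measure_mono[OF prob_space.axioms(1)[OF P]])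
           (use closure_subset Sset[OF CKm] m1 in auto)
      also have "\<dots> \<le> Pn n (closure A \<inter> K) + measure (M n) {\<omega>\<in>space (M n). Y n \<omega> \<notin> K}"
        unfolding Pn_def by (rule measure_Un_le) (use Sset[OF CKm] m1 fin in auto)
      also have "\<dots> \<le> 2 * exp (- (a n * d'))" using elim(2) q by simp
      also have "\<dots> \<le> exp (- (a n * d))" using elim(3) by simp
      finally show ?case .
    qed
  qed
  show ?thesis using part1 part2 unfolding Pn_def by blast
qed

end
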